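(* Let $c\ge 1$, $\gamma>0$, and $\mathbf{T} = \begin{pmatrix}1\\ c\end{pmatrix}\in\mathbb{R}^{2\times 1}$. Define $H:\mathbb{R}\rightrightarrows\mathbb{R}$ by $y\in H(x)$ if and only if $x = \mathbf{T}^{\dagger}S_\gamma\mathbf{T}(x+y)$. Then for $x\ge 0$, $$H(x) = \begin{cases} \gamma\,[-\tfrac1c,\tfrac1c], & x=0,\\ \{\tfrac{\gamma}{c}+\tfrac{x}{c^2}\}, & x\in\big(0,\tfrac{\gamma(c-1)c}{c^2+1}\big],\\ \{\gamma\,\tfrac{1+c}{1+c^2}\}, & x>\tfrac{\gamma(c-1)c}{c^2+1},\end{cases}$$ and $H(x) = -H(-x)$ for $x<0$. Moreover, $H$ is the subdifferential of the even function $\Phi:\mathbb{R}\to\mathbb{R}$ given by $$\Phi(x) = \begin{cases} \tfrac{\gamma x}{c} + \tfrac{x^2}{2c^2}, & x\in\big[0,\tfrac{\gamma(c-1)c}{c^2+1}\big],\\ \gamma\,\tfrac{1+c}{1+c^2}\,x - \tfrac{\gamma^2(c-1)^2}{2(c^2+1)^2}, & x>\tfrac{\gamma(c-1)c}{c^2+1},\\ \Phi(-x), & x<0.\end{cases}$$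
   Context: $\mathbf{T}^{\dagger} = \frac{1}{1+c^2}(1,c)$ is the Moore–Penrose inverse of $\mathbf{T}$. $S_\gamma:\mathbb{R}^2\to\mathbb{R}^2$ is componentwise soft shrinkage: $[S_\gamma(\mathbf{y})]_j = y_j-\gamma$ if $y_j\ge\gamma$, $y_j+\gamma$ if $y_j\le-\gamma$, $0$ if $|y_j|<\gamma$. The subdifferential of a convex $\Phi$ is $\partial\Phi(x)=\{y: y(\tilde x - x)\le \Phi(\tilde x)-\Phi(x)\ \forall \tilde x\in\mathbb{R}\}$. *)

theory Defs
  imports Complex_Main
begin

definition Tmat :: "real \<Rightarrow> real \<Rightarrow> real \<times> real" where
  "Tmat c x = (x, c * x)"

text \<open>Moore--Penrose inverse T^dagger = (1/(1+c^2)) (1, c) : R^2 \<rightarrow> R.\<close>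
definition Tdag :: "real \<Rightarrow> real \<times> real \<Rightarrow> real" where
  "Tdag c y = (fst y + c * snd y) / (1 + c^2)"

definition soft :: "real \<Rightarrow> real \<Rightarrow> real" where
  "soft \<gamma> t = (if t \<ge> \<gamma> then t - \<gamma> else if t \<le> - \<gamma> then t + \<gamma> else 0)"

definition S :: "real \<Rightarrow> real \<times> real \<Rightarrow> real \<times> real" where
  "S \<gamma> y = (soft \<gamma> (fst y), soft \<gamma> (snd y))"

definition H :: "real \<Rightarrow> real \<Rightarrow> real \<Rightarrow> real set" where
  "H c \<gamma> x = {y. x = Tdag c (S \<gamma> (Tmat c (x + y)))}"

definition Phi_pos :: "real \<Rightarrow> real \<Rightarrow> real \<Rightarrow> real" where
  "Phi_pos c \<gamma> x = (if x \<le> \<gamma> * (c - 1) * c / (c^2 + 1)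
     then \<gamma> * x / c + x^2 / (2 * c^2)
     else \<gamma> * (1 + c) / (1 + c^2) * x - \<gamma>^2 * (c - 1)^2 / (2 * (c^2 + 1)^2))"

definition Phi :: "real \<Rightarrow> real \<Rightarrow> real \<Rightarrow> real" where
  "Phi c \<gamma> x = (if x < 0 then Phi_pos c \<gamma> (- x) else Phi_pos c \<gamma> x)"

definition subdiff :: "(real \<Rightarrow> real) \<Rightarrow> real \<Rightarrow> real set" where
  "subdiff \<Phi> x = {y. \<forall>x'. y * (x' - x) \<le> \<Phi> x' - \<Phi> x}"

end

theory Submission
  imports Defs
begin

definition gg :: "real \<Rightarrow> real \<Rightarrow> real \<Rightarrow> real" where
  "gg c \<gamma> z = Tdag c (S \<gamma> (Tmat c z))"

lemma soft_neg: "\<gamma> > 0 \<Longrightarrow> soft \<gamma> (- t) = - soft \<gamma> t"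
  unfolding soft_def by auto

lemma gg_odd: "\<gamma> > 0 \<Longrightarrow> gg c \<gamma> (- z) = - gg c \<gamma> z"
  unfolding gg_def Tdag_def S_def Tmat_def by (simp add: soft_neg minus_divide_left algebra_simps)

lemma soft_small: "\<bar>t\<bar> \<le> \<gamma> \<Longrightarrow> soft \<gamma> t = 0"
  unfolding soft_def by auto

lemma soft_big: "t \<ge> \<gamma> \<Longrightarrow> soft \<gamma> t = t - \<gamma>"
  unfolding soft_def by auto

lemma gg_pos:
  assumes c: "c \<ge> 1" and g: "\<gamma> > 0" and z: "z \<ge> 0"
  shows "gg c \<gamma> z = (if z \<le> \<gamma> / c then 0 else if z \<le> \<gamma> then c * (c * z - \<gamma>) / (1 + c^2)
     else (z - \<gamma> + c * (c * z - \<gamma>)) / (1 + c^2))"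
proof -
  have cp: "c > 0" using c by simp
  have gc: "\<gamma> / c \<le> \<gamma>" using c g by (simp add: divide_le_eq)
  consider "z \<le> \<gamma> / c" | "\<gamma> / c < z" "z \<le> \<gamma>" | "z > \<gamma>" by linarith
  then show ?thesis
  proof cases
    case 1
    then have "c * z \<le> \<gamma>" using cp by (simp add: field_simps)
    then have "soft \<gamma> (c * z) = 0" using z cp g by (intro soft_small) simp
    moreover have "soft \<gamma> z = 0" using 1 gc z by (intro soft_small) simp
    ultimately show ?thesis using 1 unfolding gg_def Tdag_def S_def Tmat_def by simp
  next
    case 2
    then have "c * z > \<gamma>" using cp by (simp add: field_simps)
    then have "soft \<gamma> (c * z) = c * z - \<gamma>" by (intro soft_big) simp
    moreover have "soft \<gamma> z = 0" using 2 z by (intro soft_small) simp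
    ultimately show ?thesis using 2 unfolding gg_def Tdag_def S_def Tmat_def by simp
  next
    case 3
    then have "c * z \<ge> \<gamma>" using c g
      by (smt (verit) mult_le_cancel_right1)
    then have "soft \<gamma> (c * z) = c * z - \<gamma>" by (intro soft_big) simp
    moreover have "soft \<gamma> z = z - \<gamma>" using 3 by (intro soft_big) simp
    moreover have "\<not> z \<le> \<gamma> / c" using 3 gc by linarith
    ultimately show ?thesis using 3 unfolding gg_def Tdag_def S_def Tmat_def by simp
  qed
qed

definition aa :: "real \<Rightarrow> real \<Rightarrow> real" where
  "aa c \<gamma> = \<gamma> * (c - 1) * c / (c^2 + 1)"
definition bb :: "real \<Rightarrow> real \<Rightarrow> real" where
  "bb c \<gamma> = \<gamma> * (1 + c) / (1 + c^2)"
definition qq :: "real \<Rightarrow> real \<Rightarrow> real \<Rightarrow> real" where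
  "qq c \<gamma> u = \<gamma> / c + u / c^2"
definition pp :: "real \<Rightarrow> real \<Rightarrow> real \<Rightarrow> real" where
  "pp c \<gamma> x = (if x \<le> aa c \<gamma> then qq c \<gamma> x else bb c \<gamma>)"

lemma ab_sum: "c \<ge> 1 \<Longrightarrow> aa c \<gamma> + bb c \<gamma> = \<gamma>"
proof -
  assume c: "c \<ge> 1"
  have n: "c^2 + 1 \<noteq> 0" by (smt (verit) zero_le_power2)
  have "aa c \<gamma> + bb c \<gamma> = (\<gamma> * (c - 1) * c + \<gamma> * (1 + c)) / (c^2 + 1)"
    unfolding aa_def bb_def by (simp add: add_divide_distrib add.commute)
  also have "\<gamma> * (c - 1) * c + \<gamma> * (1 + c) = \<gamma> * (c^2 + 1)" by (simp add: algebra_simps power2_eq_square)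
  finally show ?thesis using n by simp
qed

lemma qq_a: "c \<ge> 1 \<Longrightarrow> qq c \<gamma> (aa c \<gamma>) = bb c \<gamma>"
proof -
  assume c: "c \<ge> 1"
  have n: "c^2 + 1 \<noteq> 0" "1 + c^2 \<noteq> 0" by (smt (verit) zero_le_power2)+
  have c0: "c \<noteq> 0" using c by simp
  define D where "D = c^2 + 1"
  have D0: "D \<noteq> 0" using n D_def by simp
  have "\<gamma> / c + (\<gamma> * (c - 1) * c / D) / c^2 = (\<gamma> * D + \<gamma> * (c - 1)) / (c * D)"
    using c0 D0 by (simp add: field_simps power2_eq_square)
  also have "\<gamma> * D + \<gamma> * (c - 1) = c * (\<gamma> * (1 + c))" unfolding D_def by (simp add: algebra_simps power2_eq_square)
  also have "c * (\<gamma> * (1 + c)) / (c * D) = \<gamma> * (1 + c) / D" using c0 by simp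
  finally show ?thesis unfolding D_def qq_def aa_def bb_def by (simp add: add.commute)
qed

lemma aa_nonneg: "c \<ge> 1 \<Longrightarrow> \<gamma> > 0 \<Longrightarrow> aa c \<gamma> \<ge> 0"
  unfolding aa_def by simp

lemma gg_nonneg:
  assumes c: "c \<ge> 1" and g: "\<gamma> > 0" and z: "z \<ge> 0"
  shows "gg c \<gamma> z \<ge> 0"
proof -
  have cp: "c > 0" using c by simp
  have A: "z > \<gamma> / c \<Longrightarrow> c * z - \<gamma> \<ge> 0" using cp by (simp add: field_simps)
  show ?thesis unfolding gg_pos[OF c g z] using A cp z
    by (auto intro!: divide_nonneg_pos add_nonneg_nonneg mult_nonneg_nonneg simp: add_pos_pos)
qed

lemma gg_char:
  assumes c: "c \<ge> 1" and g: "\<gamma> > 0" and x: "x > 0"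
  shows "(x = gg c \<gamma> z) \<longleftrightarrow> (z = x + pp c \<gamma> x)"
proof -
  have cp: "c > 0" using c by simp
  have d: "1 + c^2 > 0" by (simp add: add_pos_nonneg)
  have gc: "\<gamma> / c \<le> \<gamma>" using c g by (simp add: divide_le_eq)
  show ?thesis
  proof
    assume xz: "x = gg c \<gamma> z"
    have z0: "z \<ge> 0"
    proof (rule ccontr)
      assume "\<not> z \<ge> 0"
      then have "gg c \<gamma> (- z) \<ge> 0" using gg_nonneg[OF c g] by simp
      then show False using gg_odd[OF g, of c z] xz x by simp
    qed
    have z1: "z > \<gamma> / c" using xz x unfolding gg_pos[OF c g z0] by (auto split: if_splits)
    show "z = x + pp c \<gamma> x"
    proof (cases "z \<le> \<gamma>")
      case True
      have xe: "x = c * (c * z - \<gamma>) / (1 + c^2)" using xz z1 True unfolding gg_pos[OF c g z0] by simp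
      have "c * (c * z - \<gamma>) \<le> c * (c * \<gamma> - \<gamma>)" using True cp by simp
      then have "x \<le> c * (c * \<gamma> - \<gamma>) / (1 + c^2)" using xe d by (simp add: divide_right_mono)
      also have "\<dots> = aa c \<gamma>" unfolding aa_def by (simp add: field_simps)
      finally have xa: "x \<le> aa c \<gamma>" .
      have "z = x + qq c \<gamma> x" using xe cp d unfolding qq_def by (simp add: field_simps power2_eq_square)
      then show ?thesis using xa unfolding pp_def by simp
    next
      case False
      have xe: "x = (z - \<gamma> + c * (c * z - \<gamma>)) / (1 + c^2)" using xz z1 False unfolding gg_pos[OF c g z0] by simp
      then have xe2: "x = z - bb c \<gamma>" using d unfolding bb_def by (simp add: field_simps power2_eq_square)
      then have "x > aa c \<gamma>" using ab_sum[OF c, of \<gamma>] False by linarith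
      then show ?thesis using xe2 unfolding pp_def by simp
    qed
  next
    assume ze: "z = x + pp c \<gamma> x"
    show "x = gg c \<gamma> z"
    proof (cases "x \<le> aa c \<gamma>")
      case True
      have zq: "z = x + qq c \<gamma> x" using ze True unfolding pp_def by simp
      have "x / c^2 \<ge> 0" using x by simp
      then have z1: "z > \<gamma> / c" using zq x unfolding qq_def by linarith
      have "qq c \<gamma> x \<le> qq c \<gamma> (aa c \<gamma>)" using True cp unfolding qq_def by (simp add: divide_right_mono)
      then have z2: "z \<le> \<gamma>" using zq True ab_sum[OF c, of \<gamma>] qq_a[OF c, of \<gamma>] by linarith
      have z0: "z \<ge> 0" using z1 g cp by (smt (verit) divide_pos_pos)
      have "gg c \<gamma> z = c * (c * z - \<gamma>) / (1 + c^2)" unfolding gg_pos[OF c g z0] using z1 z2 by simp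
      also have "c * z - \<gamma> = x * (1 + c^2) / c" unfolding zq qq_def using cp
        by (simp add: field_simps power2_eq_square)
      also have "c * (x * (1 + c^2) / c) / (1 + c^2) = x" using cp d by simp
      finally show ?thesis by simp
    next
      case False
      have zq: "z = x + bb c \<gamma>" using ze False unfolding pp_def by simp
      have z2: "z > \<gamma>" using zq False ab_sum[OF c, of \<gamma>] by linarith
      have z0: "z \<ge> 0" using z2 g by simp
      have "gg c \<gamma> z = (z - \<gamma> + c * (c * z - \<gamma>)) / (1 + c^2)" unfolding gg_pos[OF c g z0] using z2 gc by simp
      also have "z - \<gamma> + c * (c * z - \<gamma>) = z * (1 + c^2) - \<gamma> * (1 + c)"
        by (simp add: algebra_simps power2_eq_square)
      also have "bb c \<gamma> * (1 + c^2) = \<gamma> * (1 + c)" unfolding bb_def using d by simp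
      then have "z * (1 + c^2) - \<gamma> * (1 + c) = x * (1 + c^2)" unfolding zq by (simp add: algebra_simps)
      finally show ?thesis using d by simp
    qed
  qed
qed

lemma gg_zero:
  assumes c: "c \<ge> 1" and g: "\<gamma> > 0"
  shows "gg c \<gamma> z = 0 \<longleftrightarrow> \<bar>z\<bar> \<le> \<gamma> / c"
proof -
  have cp: "c > 0" using c by simp
  have d: "1 + c^2 > 0" by (simp add: add_pos_nonneg)
  have gc: "\<gamma> / c \<le> \<gamma>" using c g by (simp add: divide_le_eq)
  have P: "gg c \<gamma> w = 0 \<longleftrightarrow> w \<le> \<gamma> / c" if w: "w \<ge> 0" for w
  proof (cases "w \<le> \<gamma> / c")
    case True
    then show ?thesis unfolding gg_pos[OF c g w] by simp
  next
    case False
    then have cw: "c * w - \<gamma> > 0" using cp by (simp add: field_simps)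
    show ?thesis
    proof (cases "w \<le> \<gamma>")
      case True
      have pos: "c * (c * w - \<gamma>) / (1 + c^2) > 0" using cw cp d by simp
      have "gg c \<gamma> w = c * (c * w - \<gamma>) / (1 + c^2)" unfolding gg_pos[OF c g w] using False True by simp
      then show ?thesis using pos False by linarith
    next
      case F2: False
      have "(w - \<gamma> + c * (c * w - \<gamma>)) / (1 + c^2) > 0" using cw cp d F2
        by (intro divide_pos_pos) (simp_all add: add_pos_pos)
      moreover have "gg c \<gamma> w = (w - \<gamma> + c * (c * w - \<gamma>)) / (1 + c^2)" unfolding gg_pos[OF c g w] using False F2 by simp
      ultimately show ?thesis using False by linarith
    qed
  qed
  show ?thesis
  proof (cases "z \<ge> 0")
    case True
    then show ?thesis using P[OF True] by simp
  next
    case False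
    have "gg c \<gamma> z = - gg c \<gamma> (- z)" using gg_odd[OF g, of c "- z"] by simp
    then show ?thesis using P[of "- z"] False by auto
  qed
qed

lemma image_uminus_real: "uminus ` (A :: real set) = {y. - y \<in> A}"
  by (force simp: image_iff intro: exI[of _ "- y" for y])

lemma eps_le:
  fixes y d M \<delta> :: real
  assumes "\<delta> > 0" "M \<ge> 0" and h: "\<forall>t. 0 < t \<and> t \<le> \<delta> \<longrightarrow> y * t \<le> d * t + M * t^2"
  shows "y \<le> d"
proof (rule ccontr)
  assume "\<not> y \<le> d"
  then have yd: "y - d > 0" by simp
  define t where "t = min \<delta> ((y - d) / (2 * (M + 1)))"
  have M1: "M + 1 > 0" using assms by simp
  have t0: "t > 0" unfolding t_def using assms yd M1 by simp
  have t1: "t \<le> \<delta>" unfolding t_def by simp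
  have t2: "t \<le> (y - d) / (2 * (M + 1))" unfolding t_def by simp
  have "y * t \<le> d * t + M * t^2" using h t0 t1 by blast
  then have "(y - d) * t \<le> (M * t) * t" by (simp add: algebra_simps power2_eq_square)
  then have "y - d \<le> M * t" using t0 by simp
  also have "M * t \<le> M * ((y - d) / (2 * (M + 1)))" using t2 assms by (intro mult_left_mono) simp_all
  also have "\<dots> < y - d"
  proof -
    have "(M + 2) * (y - d) > 0" using yd assms by simp
    then show ?thesis using M1 by (simp add: field_simps algebra_simps)
  qed
  finally show False by simp
qed

lemma subdiff_even:
  assumes ev: "\<And>x. f (- x) = f x"
  shows "subdiff f x = uminus ` subdiff f (- x)"
proof -
  have "(\<forall>x'. y * (x' - x) \<le> f x' - f x) \<longleftrightarrow> (\<forall>x'. - y * (x' - - x) \<le> f x' - f (- x))" for y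
  proof
    assume A: "\<forall>x'. y * (x' - x) \<le> f x' - f x"
    show "\<forall>x'. - y * (x' - - x) \<le> f x' - f (- x)"
    proof
      fix x'
      have "y * (- x' - x) \<le> f (- x') - f x" using A by blast
      then show "- y * (x' - - x) \<le> f x' - f (- x)" using ev[of x'] ev[of x] by (simp add: algebra_simps)
    qed
  next
    assume A: "\<forall>x'. - y * (x' - - x) \<le> f x' - f (- x)"
    show "\<forall>x'. y * (x' - x) \<le> f x' - f x"
    proof
      fix x'
      have "- y * (- x' - - x) \<le> f (- x') - f (- x)" using A by blast
      then show "y * (x' - x) \<le> f x' - f x" using ev[of x'] ev[of x] by (simp add: algebra_simps)
    qed
  qed
  then show ?thesis unfolding subdiff_def image_uminus_real by auto
qed

definition QQ :: "real \<Rightarrow> real \<Rightarrow> real \<Rightarrow> real" where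
  "QQ c \<gamma> u = \<gamma> * u / c + u^2 / (2 * c^2)"
definition LL :: "real \<Rightarrow> real \<Rightarrow> real \<Rightarrow> real" where
  "LL c \<gamma> u = bb c \<gamma> * u - \<gamma>^2 * (c - 1)^2 / (2 * (c^2 + 1)^2)"

lemma Phi_pos_eq: "Phi_pos c \<gamma> x = (if x \<le> aa c \<gamma> then QQ c \<gamma> x else LL c \<gamma> x)"
  unfolding Phi_pos_def aa_def QQ_def LL_def bb_def by simp

lemma QQ_taylor:
  assumes c: "c \<ge> 1"
  shows "QQ c \<gamma> u = QQ c \<gamma> x + qq c \<gamma> x * (u - x) + (u - x)^2 / (2 * c^2)"
proof -
  have c0: "c \<noteq> 0" using c by simp
  show ?thesis unfolding QQ_def qq_def using c0 by (simp add: field_simps power2_eq_square)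
qed

lemma LL_lin: "LL c \<gamma> u = LL c \<gamma> x + bb c \<gamma> * (u - x)"
  unfolding LL_def by (simp add: algebra_simps)

lemma QQ_LL_a:
  assumes c: "c \<ge> 1"
  shows "QQ c \<gamma> (aa c \<gamma>) = LL c \<gamma> (aa c \<gamma>)"
proof -
  have c0: "c \<noteq> 0" using c by simp
  have n: "c^2 + 1 \<noteq> 0" by (smt (verit) zero_le_power2)
  define k where "k = \<gamma> / (c^2 + 1)"
  have g: "\<gamma> = k * (c^2 + 1)" unfolding k_def using n by simp
  have a: "aa c \<gamma> = k * c * (c - 1)" unfolding aa_def k_def by (simp add: algebra_simps)
  have b: "bb c \<gamma> = k * (1 + c)" unfolding bb_def k_def by (simp add: add.commute)
  have K: "\<gamma>^2 * (c - 1)^2 / (2 * (c^2 + 1)^2) = k^2 * (c - 1)^2 / 2"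
    unfolding k_def by (simp add: power_divide)
  have "QQ c \<gamma> (aa c \<gamma>) = k * (c^2 + 1) * (k * c * (c - 1)) / c + (k * c * (c - 1))^2 / (2 * c^2)"
    unfolding QQ_def a by (simp add: g)
  also have "\<dots> = k^2 * (c^2 + 1) * (c - 1) + k^2 * (c - 1)^2 / 2"
    using c0 by (simp add: field_simps power2_eq_square)
  also have "\<dots> = k * (1 + c) * (k * c * (c - 1)) - k^2 * (c - 1)^2 / 2"
    by (simp add: field_simps power2_eq_square)
  also have "\<dots> = LL c \<gamma> (aa c \<gamma>)" unfolding LL_def a b K by simp
  finally show ?thesis .
qed

lemma QQ_LL:
  assumes c: "c \<ge> 1"
  shows "QQ c \<gamma> u = LL c \<gamma> u + (u - aa c \<gamma>)^2 / (2 * c^2)"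
  using QQ_taylor[OF c, of \<gamma> u "aa c \<gamma>"] QQ_LL_a[OF c, of \<gamma>] LL_lin[of c \<gamma> u "aa c \<gamma>"] qq_a[OF c, of \<gamma>]
  by simp

lemma sq_mono: "0 \<le> (p::real) \<Longrightarrow> p \<le> q \<Longrightarrow> p^2 / (2 * c^2) \<le> q^2 / (2 * c^2)"
  by (intro divide_right_mono power_mono) simp_all

lemma sq_nonneg: "0 \<le> (p::real)^2 / (2 * c^2)"
  by simp

lemma Phi_pos_lower:
  assumes c: "c \<ge> 1"
  shows "Phi_pos c \<gamma> u \<ge> Phi_pos c \<gamma> x + pp c \<gamma> x * (u - x)"
proof -
  note T = QQ_taylor[OF c, of \<gamma> u x] and QL = QQ_LL[OF c, of \<gamma> u] and L = LL_lin[of c \<gamma> u x]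
  note n1 = sq_nonneg[of "u - x" c] and n2 = sq_nonneg[of "u - aa c \<gamma>" c]
  show ?thesis
  proof (cases "x \<le> aa c \<gamma>")
    case True
    show ?thesis
    proof (cases "u \<le> aa c \<gamma>")
      case True
      then show ?thesis using \<open>x \<le> aa c \<gamma>\<close> T n1 unfolding Phi_pos_eq pp_def by simp
    next
      case False
      have "(u - aa c \<gamma>)^2 / (2 * c^2) \<le> (u - x)^2 / (2 * c^2)"
        using False \<open>x \<le> aa c \<gamma>\<close> by (intro sq_mono) simp_all
      then show ?thesis using \<open>x \<le> aa c \<gamma>\<close> False T QL unfolding Phi_pos_eq pp_def by simp
    qed
  next
    case False
    then show ?thesis using QL L n2 unfolding Phi_pos_eq pp_def by auto
  qed
qed

lemma Phi_pos_upper: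
  assumes c: "c \<ge> 1"
  shows "Phi_pos c \<gamma> u \<le> Phi_pos c \<gamma> x + pp c \<gamma> x * (u - x) + (u - x)^2 / (2 * c^2)"
proof -
  note T = QQ_taylor[OF c, of \<gamma> u x] and QL = QQ_LL[OF c, of \<gamma> u] and L = LL_lin[of c \<gamma> u x]
  note n1 = sq_nonneg[of "u - x" c] and n2 = sq_nonneg[of "u - aa c \<gamma>" c]
  show ?thesis
  proof (cases "x \<le> aa c \<gamma>")
    case True
    have px: "Phi_pos c \<gamma> x = QQ c \<gamma> x" "pp c \<gamma> x = qq c \<gamma> x" using True unfolding Phi_pos_eq pp_def by simp_all
    have "Phi_pos c \<gamma> u \<le> QQ c \<gamma> u" using QL n2 unfolding Phi_pos_eq by simp
    then show ?thesis unfolding px using T by linarith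
  next
    case False
    show ?thesis
    proof (cases "u \<le> aa c \<gamma>")
      case True
      have "(aa c \<gamma> - u)^2 / (2 * c^2) \<le> (x - u)^2 / (2 * c^2)"
        using False True by (intro sq_mono) simp_all
      then have "(u - aa c \<gamma>)^2 / (2 * c^2) \<le> (u - x)^2 / (2 * c^2)"
        by (simp add: power2_commute)
      then show ?thesis using False True QL L unfolding Phi_pos_eq pp_def by simp
    next
      case F2: False
      then show ?thesis using False L n1 unfolding Phi_pos_eq pp_def by simp
    qed
  qed
qed

lemma Phi_abs: "Phi c \<gamma> u = Phi_pos c \<gamma> \<bar>u\<bar>"
  unfolding Phi_def by simp

lemma Phi_even: "Phi c \<gamma> (- u) = Phi c \<gamma> u"
  unfolding Phi_abs by simp

lemma pp_nonneg:
  assumes c: "c \<ge> 1" and g: "\<gamma> > 0" and x: "x \<ge> 0"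
  shows "pp c \<gamma> x \<ge> 0"
proof -
  have "qq c \<gamma> x \<ge> 0" unfolding qq_def using c g x by simp
  moreover have "bb c \<gamma> \<ge> 0" unfolding bb_def using c g by (simp add: add_pos_nonneg)
  ultimately show ?thesis unfolding pp_def by simp
qed

lemma pp_zero: "c \<ge> 1 \<Longrightarrow> \<gamma> > 0 \<Longrightarrow> pp c \<gamma> 0 = \<gamma> / c"
  using aa_nonneg[of c \<gamma>] unfolding pp_def qq_def by simp

lemma Phi_pos_zero: "c \<ge> 1 \<Longrightarrow> \<gamma> > 0 \<Longrightarrow> Phi_pos c \<gamma> 0 = 0"
  using aa_nonneg[of c \<gamma>] unfolding Phi_pos_eq QQ_def by simp

lemma subdiff_pos:
  assumes c: "c \<ge> 1" and g: "\<gamma> > 0" and x: "x > 0"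
  shows "subdiff (Phi c \<gamma>) x = {pp c \<gamma> x}"
proof
  show "{pp c \<gamma> x} \<subseteq> subdiff (Phi c \<gamma>) x"
  proof -
    have "pp c \<gamma> x * (u - x) \<le> Phi c \<gamma> u - Phi c \<gamma> x" for u
    proof -
      have "pp c \<gamma> x * (u - x) \<le> pp c \<gamma> x * (\<bar>u\<bar> - x)"
        using pp_nonneg[OF c g, of x] x by (intro mult_left_mono) simp_all
      also have "\<dots> \<le> Phi_pos c \<gamma> \<bar>u\<bar> - Phi_pos c \<gamma> x" using Phi_pos_lower[OF c, of \<gamma> x "\<bar>u\<bar>"] by simp
      finally show ?thesis unfolding Phi_abs using x by simp
    qed
    then show ?thesis unfolding subdiff_def by simp
  qed
next
  show "subdiff (Phi c \<gamma>) x \<subseteq> {pp c \<gamma> x}"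
  proof
    fix y assume "y \<in> subdiff (Phi c \<gamma>) x"
    then have Y: "\<And>u. y * (u - x) \<le> Phi c \<gamma> u - Phi c \<gamma> x" unfolding subdiff_def by simp
    have M: "1 / (2 * c^2) \<ge> 0" by simp
    have "y \<le> pp c \<gamma> x"
    proof (rule eps_le[OF x M], intro allI impI)
      fix t assume t: "0 < t \<and> t \<le> x"
      have "y * t \<le> Phi c \<gamma> (x + t) - Phi c \<gamma> x" using Y[of "x + t"] by simp
      also have "\<dots> = Phi_pos c \<gamma> (x + t) - Phi_pos c \<gamma> x" unfolding Phi_abs using x t by simp
      also have "\<dots> \<le> pp c \<gamma> x * t + t^2 / (2 * c^2)" using Phi_pos_upper[OF c, of \<gamma> "x + t" x] by simp
      finally show "y * t \<le> pp c \<gamma> x * t + 1 / (2 * c^2) * t^2" by simp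
    qed
    moreover have "- y \<le> - pp c \<gamma> x"
    proof (rule eps_le[OF x M], intro allI impI)
      fix t assume t: "0 < t \<and> t \<le> x"
      have "- y * t \<le> Phi c \<gamma> (x - t) - Phi c \<gamma> x" using Y[of "x - t"] by simp
      also have "\<dots> = Phi_pos c \<gamma> (x - t) - Phi_pos c \<gamma> x" unfolding Phi_abs using x t by simp
      also have "\<dots> \<le> - pp c \<gamma> x * t + t^2 / (2 * c^2)" using Phi_pos_upper[OF c, of \<gamma> "x - t" x] by simp
      finally show "- y * t \<le> - pp c \<gamma> x * t + 1 / (2 * c^2) * t^2" by simp
    qed
    ultimately show "y \<in> {pp c \<gamma> x}" by simp
  qed
qed

lemma subdiff_zero:
  assumes c: "c \<ge> 1" and g: "\<gamma> > 0"
  shows "subdiff (Phi c \<gamma>) 0 = {- \<gamma> / c .. \<gamma> / c}"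
proof
  have P0: "Phi c \<gamma> 0 = 0" unfolding Phi_abs using Phi_pos_zero[OF c g] by simp
  have cp: "c > 0" using c by simp
  show "{- \<gamma> / c .. \<gamma> / c} \<subseteq> subdiff (Phi c \<gamma>) 0"
  proof
    fix y assume "y \<in> {- \<gamma> / c .. \<gamma> / c}"
    then have yb: "\<bar>y\<bar> \<le> \<gamma> / c" by auto
    have "y * (u - 0) \<le> Phi c \<gamma> u - Phi c \<gamma> 0" for u
    proof -
      have "y * u \<le> \<bar>y\<bar> * \<bar>u\<bar>" by (metis abs_ge_self abs_mult)
      also have "\<dots> \<le> \<gamma> / c * \<bar>u\<bar>" using yb by (intro mult_right_mono) simp_all
      also have "\<dots> \<le> Phi_pos c \<gamma> \<bar>u\<bar>"
        using Phi_pos_lower[OF c, of \<gamma> 0 "\<bar>u\<bar>"] pp_zero[OF c g] Phi_pos_zero[OF c g] by simp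
      finally show ?thesis using Phi_pos_zero[OF c g] unfolding Phi_abs by simp
    qed
    then show "y \<in> subdiff (Phi c \<gamma>) 0" unfolding subdiff_def by simp
  qed
next
  have P0: "Phi c \<gamma> 0 = 0" unfolding Phi_abs using Phi_pos_zero[OF c g] by simp
  show "subdiff (Phi c \<gamma>) 0 \<subseteq> {- \<gamma> / c .. \<gamma> / c}"
  proof
    fix y assume "y \<in> subdiff (Phi c \<gamma>) 0"
    then have Y: "\<And>u. y * u \<le> Phi c \<gamma> u" unfolding subdiff_def P0 by simp
    have M: "1 / (2 * c^2) \<ge> 0" by simp
    have one: "(1::real) > 0" by simp
    have U: "Phi_pos c \<gamma> t \<le> \<gamma> / c * t + 1 / (2 * c^2) * t^2" for t
      using Phi_pos_upper[OF c, of \<gamma> t 0] pp_zero[OF c g] Phi_pos_zero[OF c g] by simp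
    have "y \<le> \<gamma> / c"
    proof (rule eps_le[OF one M], intro allI impI)
      fix t :: real assume t: "0 < t \<and> t \<le> 1"
      have "y * t \<le> Phi_pos c \<gamma> t" using Y[of t] t unfolding Phi_abs by simp
      then show "y * t \<le> \<gamma> / c * t + 1 / (2 * c^2) * t^2" using U[of t] by linarith
    qed
    moreover have "- y \<le> \<gamma> / c"
    proof (rule eps_le[OF one M], intro allI impI)
      fix t :: real assume t: "0 < t \<and> t \<le> 1"
      have "y * (- t) \<le> Phi_pos c \<gamma> t" using Y[of "- t"] t unfolding Phi_abs by simp
      then show "- y * t \<le> \<gamma> / c * t + 1 / (2 * c^2) * t^2" using U[of t] by linarith
    qed
    ultimately show "y \<in> {- \<gamma> / c .. \<gamma> / c}" by simp
  qed
qed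

lemma H_gg: "H c \<gamma> x = {y. x = gg c \<gamma> (x + y)}"
  unfolding H_def gg_def by simp

lemma H_pos:
  assumes c: "c \<ge> 1" and g: "\<gamma> > 0" and x: "x > 0"
  shows "H c \<gamma> x = {pp c \<gamma> x}"
  unfolding H_gg using gg_char[OF c g x] by auto

lemma H_zero:
  assumes c: "c \<ge> 1" and g: "\<gamma> > 0"
  shows "H c \<gamma> 0 = {- \<gamma> / c .. \<gamma> / c}"
proof -
  have E: "y \<in> H c \<gamma> 0 \<longleftrightarrow> gg c \<gamma> y = 0" for y unfolding H_gg by auto
  show ?thesis
  proof (rule set_eqI)
    fix y
    show "y \<in> H c \<gamma> 0 \<longleftrightarrow> y \<in> {- \<gamma> / c .. \<gamma> / c}"
      unfolding E gg_zero[OF c g] abs_le_iff by auto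
  qed
qed

lemma H_neg:
  assumes g: "\<gamma> > 0"
  shows "H c \<gamma> x = uminus ` H c \<gamma> (- x)"
proof -
  show ?thesis
  proof (rule set_eqI)
    fix y
    have o: "gg c \<gamma> (- x + - y) = - gg c \<gamma> (x + y)" using gg_odd[OF g, of c "x + y"] by simp
    have "y \<in> H c \<gamma> x \<longleftrightarrow> x = gg c \<gamma> (x + y)" unfolding H_gg by simp
    also have "\<dots> \<longleftrightarrow> - x = gg c \<gamma> (- x + - y)" unfolding o by linarith
    also have "\<dots> \<longleftrightarrow> y \<in> uminus ` H c \<gamma> (- x)" 
    proof -
      have "- y - x = - x + - y" by simp
      then show ?thesis unfolding H_gg image_uminus_real by (simp only: mem_Collect_eq minus_minus diff_conv_add_uminus)
    qed
    finally show "y \<in> H c \<gamma> x \<longleftrightarrow> y \<in> uminus ` H c \<gamma> (- x)" .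
  qed
qed

theorem lemma2p1:
  fixes c \<gamma> :: real
  assumes "c \<ge> 1" and "\<gamma> > 0"
  shows "(\<forall>x\<ge>0. H c \<gamma> x =
            (if x = 0 then {- \<gamma> / c .. \<gamma> / c}
             else if x \<le> \<gamma> * (c - 1) * c / (c^2 + 1) then {\<gamma> / c + x / c^2}
             else {\<gamma> * (1 + c) / (1 + c^2)}))
       \<and> (\<forall>x<0. H c \<gamma> x = uminus ` H c \<gamma> (- x))
       \<and> (\<forall>x. Phi c \<gamma> (- x) = Phi c \<gamma> x)
       \<and> (\<forall>x. H c \<gamma> x = subdiff (Phi c \<gamma>) x)"
proof (intro conjI allI impI)
  fix x :: real assume x: "x \<ge> 0"
  show "H c \<gamma> x =
            (if x = 0 then {- \<gamma> / c .. \<gamma> / c}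
             else if x \<le> \<gamma> * (c - 1) * c / (c^2 + 1) then {\<gamma> / c + x / c^2}
             else {\<gamma> * (1 + c) / (1 + c^2)})"
  proof (cases "x = 0")
    case True
    then show ?thesis using H_zero[OF assms] by simp
  next
    case False
    then have "x > 0" using x by simp
    then show ?thesis using H_pos[OF assms] False unfolding pp_def aa_def qq_def bb_def by simp
  qed
next
  fix x :: real assume "x < 0"
  show "H c \<gamma> x = uminus ` H c \<gamma> (- x)" using H_neg[OF assms(2)] .
next
  fix x show "Phi c \<gamma> (- x) = Phi c \<gamma> x" by (rule Phi_even)
next
  fix x :: real
  have pos: "H c \<gamma> x = subdiff (Phi c \<gamma>) x" if "x > 0" for x
    using H_pos[OF assms that] subdiff_pos[OF assms that] by simp
  show "H c \<gamma> x = subdiff (Phi c \<gamma>) x"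
  proof (cases "x > 0")
    case True then show ?thesis by (rule pos)
  next
    case False
    show ?thesis
    proof (cases "x = 0")
      case True then show ?thesis using H_zero[OF assms] subdiff_zero[OF assms] by simp
    next
      case F2: False
      then have "- x > 0" using False by simp
      then show ?thesis using H_neg[OF assms(2), of c x] pos[of "- x"]
        subdiff_even[of "Phi c \<gamma>" x, OF Phi_even] by simp
    qed
  qed
qed

end
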